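(* Let $G$ be a parallel-edge network with pairwise distinct lengths $l_1,\dots,l_m>0$, each $f_e$ a standard response function, and let $\mathbf{x}(t)$ solve $\dot x_e = x_e\left(f_e\!\left(\mathcal{E}/l_e\right)-1\right)$ ($e\in E$), $\mathcal{E}=\left(\sum_{e\in E}x_e/l_e\right)^{-1}$, with initial condition $\mathbf{x}(0)\in\mathbb{R}^E_{>0}$ (all coordinates strictly positive). Let $i^*$ be the edge of minimum length. Then, as $t\to\infty$, $\mathcal{E}(t)\to l_{i^*}$ and $\mathbf{x}(t)\to\boldsymbol{\chi}_{i^*}$, the $i^*$-th standard basis vector of $\mathbb{R}^E$.
   Context: A parallel-edge network is a multigraph with exactly two nodes $s_0,s_1$ and edge set $E=\{1,\dots,m\}$, each edge joining $s_0$ and $s_1$, with lengths $l_e>0$. A function $f:\mathbb{R}_{\ge0}\to\mathbb{R}_{\ge0}$ is a standard response function if $f(1)=1$, $f$ is strictly increasing on $\mathbb{R}_{>0}$, and $f$ is differentiable on $\mathbb{R}_{>0}$. (This system is the specialization to parallel-edge networks of the adaptation dynamics $\dot x_e = x_e(f_e(|q_e|/x_e)-1)$, where $\mathbf{q}$ is the unit-value minimum-energy $s_0$-$s_1$ flow with edge resistances $l_e/x_e$.) *)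

theory Defs
  imports "HOL-Analysis.Analysis"
begin

definition standard_response :: "(real \<Rightarrow> real) \<Rightarrow> bool" where
  "standard_response f \<longleftrightarrow>
     (\<forall>y\<ge>0. f y \<ge> 0) \<and> f 1 = 1 \<and>
     strict_mono_on {0<..} f \<and>
     (\<forall>y>0. f differentiable (at y))"

definition energy :: "('e::finite \<Rightarrow> real) \<Rightarrow> ('e \<Rightarrow> real) \<Rightarrow> real" where
  "energy l x = inverse (\<Sum>e\<in>UNIV. x e / l e)"

end

theory Submission
  imports Defs
begin

lemma deriv_at_int:
  fixes u :: "real \<Rightarrow> real"
  assumes "tz < t" "(u has_real_derivative D) (at t within {tz..})"
  shows "(u has_real_derivative D) (at t)"
proof -
  have "t \<in> interior {tz..}" using assms(1) by simp
  then have "at t within {tz..} = at t" by (rule at_within_interior)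
  then show ?thesis using assms(2) by simp
qed

lemma cont_from_deriv:
  fixes u :: "real \<Rightarrow> real"
  assumes "\<And>t. t \<ge> tz \<Longrightarrow> (u has_real_derivative u' t) (at t within {tz..})" "tz \<le> a"
  shows "continuous_on {a..b} u"
proof (rule DERIV_continuous_on)
  fix t assume "t \<in> {a..b}"
  then show "(u has_real_derivative u' t) (at t within {a..b})"
    using assms by (intro has_field_derivative_subset[OF assms(1)]) auto
qed

lemma invariance:
  fixes u u' :: "real \<Rightarrow> real"
  assumes d: "\<And>t. t \<ge> tz \<Longrightarrow> (u has_real_derivative u' t) (at t within {tz..})"
    and s: "\<And>t. t > tz \<Longrightarrow> u t > K \<Longrightarrow> u' t \<le> 0"
    and t1: "t1 \<ge> tz"
  shows "u t1 \<le> max (u tz) K"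
proof (rule ccontr)
  assume nt: "\<not> u t1 \<le> max (u tz) K"
  define Z where "Z = {s \<in> {tz..t1}. u s \<le> max (u tz) K}"
  have cz: "closed Z" unfolding Z_def
    by (rule continuous_on_closed_Collect_le) (auto intro: cont_from_deriv[OF d])
  have tzZ: "tz \<in> Z" using t1 by (auto simp: Z_def)
  have bz: "bdd_above Z" unfolding Z_def by (auto intro: bdd_aboveI[of _ t1])
  define a where "a = Sup Z"
  have aZ: "a \<in> Z" unfolding a_def using closed_contains_Sup[OF _ bz cz] tzZ by auto
  have "a \<le> t1" "tz \<le> a" using aZ by (auto simp: Z_def)
  have "a \<noteq> t1" using aZ nt by (auto simp: Z_def)
  have out: "u s > max (u tz) K" if "a < s" "s \<le> t1" for s
  proof (rule ccontr)
    assume "\<not> ?thesis"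
    then have "s \<in> Z" using that \<open>tz \<le> a\<close> by (auto simp: Z_def)
    then have "s \<le> a" unfolding a_def using bz by (rule cSup_upper)
    then show False using that by simp
  qed
  have "u t1 \<le> u a"
  proof (rule DERIV_nonpos_imp_decreasing_open[OF \<open>a \<le> t1\<close>])
    fix x assume x: "a < x" "x < t1"
    then have "(u has_real_derivative u' x) (at x)"
      using \<open>tz \<le> a\<close> by (intro deriv_at_int[OF _ d]) auto
    moreover have "u' x \<le> 0" using s[of x] out[of x] x \<open>tz \<le> a\<close> by auto
    ultimately show "\<exists>y. DERIV u x :> y \<and> y \<le> 0" by blast
  next
    show "continuous_on {a..t1} u" by (rule cont_from_deriv[OF d \<open>tz \<le> a\<close>])
  qed
  then show False using aZ nt by (auto simp: Z_def)
qed

lemma eventually_below: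
  fixes u u' :: "real \<Rightarrow> real"
  assumes d: "\<And>t. t \<ge> tz \<Longrightarrow> (u has_real_derivative u' t) (at t within {tz..})"
    and c: "c > 0"
    and s: "\<And>t. t \<ge> tz \<Longrightarrow> u t > K \<Longrightarrow> u' t \<le> -c"
  shows "\<exists>T. \<forall>t\<ge>T. u t \<le> K"
proof -
  have "\<exists>t2\<ge>tz. u t2 \<le> K"
  proof (rule ccontr)
    assume "\<not> ?thesis"
    then have big: "\<And>t. t \<ge> tz \<Longrightarrow> u t > K" by force
    define T where "T = tz + (\<bar>u tz - K\<bar>) / c + 1"
    have "T \<ge> tz" using c by (simp add: T_def)
    have "(\<lambda>t. u t + c * t) T \<le> (\<lambda>t. u t + c * t) tz"
    proof (rule DERIV_nonpos_imp_decreasing_open[OF \<open>T \<ge> tz\<close>])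
      fix x assume x: "tz < x" "x < T"
      have "(u has_real_derivative u' x) (at x)" using x by (intro deriv_at_int[OF _ d]) auto
      then have "((\<lambda>t. u t + c * t) has_real_derivative u' x + c) (at x)"
        by (auto intro!: derivative_eq_intros)
      moreover have "u' x + c \<le> 0" using s[of x] big[of x] x by auto
      ultimately show "\<exists>y. DERIV (\<lambda>t. u t + c * t) x :> y \<and> y \<le> 0" by blast
    next
      show "continuous_on {tz..T} (\<lambda>t. u t + c * t)"
        by (intro continuous_intros cont_from_deriv[OF d]) auto
    qed
    then have "u T \<le> u tz - c * (T - tz)" by (simp add: algebra_simps)
    also have "c * (T - tz) = \<bar>u tz - K\<bar> + c" using c by (simp add: T_def field_simps)
    finally have "u T < K" using c by linarith
    then show False using big[OF \<open>T \<ge> tz\<close>] by simp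
  qed
  then obtain t2 where t2: "t2 \<ge> tz" "u t2 \<le> K" by blast
  have "\<forall>t\<ge>t2. u t \<le> K"
  proof (intro allI impI)
    fix t assume "t \<ge> t2"
    have "u t \<le> max (u t2) K"
    proof (rule invariance[OF _ _ \<open>t \<ge> t2\<close>])
      fix s assume "s \<ge> t2"
      then show "(u has_real_derivative u' s) (at s within {t2..})"
        using t2 by (intro has_field_derivative_subset[OF d]) auto
    next
      fix s assume "s > t2" "u s > K"
      then show "u' s \<le> 0" using s[of s] c t2 by auto
    qed
    then show "u t \<le> K" using t2 by simp
  qed
  then show ?thesis by blast
qed

theorem theorem2:
  fixes l :: "'e::finite \<Rightarrow> real"
    and f :: "'e \<Rightarrow> real \<Rightarrow> real"
    and x :: "real \<Rightarrow> 'e \<Rightarrow> real"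
    and istar :: 'e
  assumes l_pos: "\<And>e. l e > 0"
    and l_distinct: "inj l"
    and f_std: "\<And>e. standard_response (f e)"
    and ode: "\<And>e t. t \<ge> 0 \<Longrightarrow>
        ((\<lambda>s. x s e) has_real_derivative
           x t e * (f e (energy l (x t) / l e) - 1)) (at t within {0..})"
    and init_pos: "\<And>e. x 0 e > 0"
    and istar_min: "\<And>e. l istar \<le> l e"
  shows "((\<lambda>t. energy l (x t)) \<longlongrightarrow> l istar) at_top \<and>
         (\<forall>e. ((\<lambda>t. x t e) \<longlongrightarrow> (if e = istar then 1 else 0)) at_top)"
proof -
  define m where "m = l istar"
  have mpos: "m > 0" using l_pos by (simp add: m_def)
  have mle: "\<And>e. m \<le> l e" using istar_min by (simp add: m_def)
  define S where "S = (\<lambda>t. \<Sum>e\<in>UNIV. x t e / l e)"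
  define E where "E = (\<lambda>t. inverse (S t))"
  have E_en: "energy l (x t) = E t" for t by (simp add: E_def S_def energy_def)
  define g where "g = (\<lambda>e t. f e (E t / l e) - 1)"
  have dx: "((\<lambda>s. x s e) has_real_derivative x t e * g e t) (at t within {0..})" if "t \<ge> 0" for e t
    using ode[OF that, of e] by (simp add: g_def E_en)
  have f0: "f e y \<ge> 0" if "y \<ge> 0" for e y using f_std[of e] that by (simp add: standard_response_def)
  have f1: "f e 1 = 1" for e using f_std[of e] by (simp add: standard_response_def)
  have fmono: "f e a < f e b" if "0 < a" "a < b" for e a b
    using f_std[of e] that by (auto simp: standard_response_def strict_mono_on_def)
  have fmono_le: "f e a \<le> f e b" if "0 < a" "a \<le> b" for e a b
    using fmono[of a b e] that by (cases "a = b") auto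
  have fcont: "isCont (f e) y" if "y > 0" for e y
    using f_std[of e] that by (auto simp: standard_response_def intro: differentiable_imp_continuous_within)
  have xcont: "continuous_on {a..b} (\<lambda>s. x s e)" if "0 \<le> a" for a b e
    by (rule cont_from_deriv[OF dx that])
  have pos: "x t e > 0" if "t \<ge> 0" for t e
  proof (rule ccontr)
    assume "\<not> x t e > 0"
    then have xt: "x t e \<le> 0" by simp
    define Z where "Z = (\<Union>e'. {s \<in> {0..t}. x s e' \<le> 0})"
    have cz: "closed Z" unfolding Z_def
      by (intro closed_UN finite_UNIV ballI continuous_on_closed_Collect_le xcont) auto
    have tZ: "t \<in> Z" using xt that by (auto simp: Z_def)
    have bz: "bdd_below Z" unfolding Z_def by (auto intro: bdd_belowI[of _ 0])
    define a where "a = Inf Z"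
    have aZ: "a \<in> Z" unfolding a_def using closed_contains_Inf[OF _ bz cz] tZ by auto
    then obtain e0 where a0: "0 \<le> a" "x a e0 \<le> 0" by (auto simp: Z_def)
    have before: "x s e' > 0" if "0 \<le> s" "s < a" for s e'
    proof (rule ccontr)
      assume "\<not> ?thesis"
      moreover have "a \<le> t" using aZ by (auto simp: Z_def)
      ultimately have "s \<in> {s\<in>{0..t}. x s e' \<le> 0}" using that by auto
      then have "s \<in> Z" unfolding Z_def by blast
      then have "a \<le> s" unfolding a_def using bz by (rule cInf_lower)
      then show False using that by simp
    qed
    have "a \<noteq> 0" using a0 init_pos[of e0] by auto
    then have apos: "a > 0" using a0 by simp
    have "(\<lambda>s. x s e0 * exp s) 0 \<le> (\<lambda>s. x s e0 * exp s) a"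
    proof (rule DERIV_nonneg_imp_increasing_open[where f="\<lambda>s. x s e0 * exp s"])
      show "0 \<le> a" using a0 by simp
      show "continuous_on {0..a} (\<lambda>s. x s e0 * exp s)"
        by (intro continuous_intros xcont) auto
    next
      fix s assume s: "0 < s" "s < a"
      have d1: "((\<lambda>s. x s e0) has_real_derivative x s e0 * g e0 s) (at s)"
        using s by (intro deriv_at_int[OF _ dx]) auto
      have "((\<lambda>s. x s e0 * exp s) has_real_derivative x s e0 * g e0 s * exp s + x s e0 * exp s) (at s)"
        by (rule derivative_eq_intros d1 DERIV_exp refl)+ simp
      moreover have "x s e0 * g e0 s * exp s + x s e0 * exp s = x s e0 * exp s * f e0 (E s / l e0)"
        by (simp add: g_def algebra_simps)
      moreover have "S s > 0" unfolding S_def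
        using before[of s] s l_pos by (intro sum_pos) auto
      then have "E s > 0" by (simp add: E_def)
      then have "f e0 (E s / l e0) \<ge> 0" using l_pos[of e0] by (intro f0) (simp add: less_imp_le)
      then have "x s e0 * exp s * f e0 (E s / l e0) \<ge> 0" using before[of s e0] s by simp
      ultimately show "\<exists>y. ((\<lambda>s. x s e0 * exp s) has_real_derivative y) (at s) \<and> 0 \<le> y" by metis
    qed
    then have "x 0 e0 \<le> x a e0 * exp a" by simp
    moreover have "x a e0 * exp a \<le> 0" using a0 by (simp add: mult_nonpos_nonneg)
    ultimately show False using init_pos[of e0] by simp
  qed
  have Spos: "S t > 0" if "t \<ge> 0" for t
    unfolding S_def using pos[OF that] l_pos by (intro sum_pos) auto
  have Epos: "E t > 0" if "t \<ge> 0" for t using Spos[OF that] by (simp add: E_def)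
  define S' where "S' = (\<lambda>t. \<Sum>e\<in>UNIV. x t e * g e t / l e)"
  have dS: "(S has_real_derivative S' t) (at t within {0..})" if "t \<ge> 0" for t
    unfolding S_def S'_def by (rule DERIV_sum, rule DERIV_cdivide, rule dx[OF that])
  have S'_eq: "S' t = (\<Sum>e\<in>UNIV. (x t e / l e) * g e t)" for t
    unfolding S'_def by (simp add: field_simps)
  have wavg_le: "(\<Sum>e\<in>A. (x t e / l e) * g e t) \<le> B * (\<Sum>e\<in>A. x t e / l e)"
    if "t \<ge> 0" "\<And>e. e \<in> A \<Longrightarrow> g e t \<le> B" for t A B
  proof -
    have "(\<Sum>e\<in>A. (x t e / l e) * g e t) \<le> (\<Sum>e\<in>A. (x t e / l e) * B)"
      using that pos[OF that(1)] l_pos by (intro sum_mono mult_left_mono) (auto intro: less_imp_le)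
    also have "\<dots> = B * (\<Sum>e\<in>A. x t e / l e)" by (simp add: sum_distrib_left mult.commute)
    finally show ?thesis .
  qed
  have wavg_ge: "(\<Sum>e\<in>A. (x t e / l e) * g e t) \<ge> B * (\<Sum>e\<in>A. x t e / l e)"
    if "t \<ge> 0" "\<And>e. e \<in> A \<Longrightarrow> g e t \<ge> B" for t A B
  proof -
    have "(\<Sum>e\<in>A. (x t e / l e) * g e t) \<ge> (\<Sum>e\<in>A. (x t e / l e) * B)"
      using that pos[OF that(1)] l_pos by (intro sum_mono mult_left_mono) (auto intro: less_imp_le)
    moreover have "(\<Sum>e\<in>A. (x t e / l e) * B) = B * (\<Sum>e\<in>A. x t e / l e)" by (simp add: sum_distrib_left mult.commute)
    ultimately show ?thesis by simp
  qed
  have term_le_S: "x t e / l e \<le> S t" if "t \<ge> 0" for t e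
    unfolding S_def using pos[OF that] l_pos by (intro member_le_sum) (auto intro: less_imp_le)
  have xbound: "x t e \<le> max (x 0 e) 1" if "t \<ge> 0" for t e
  proof (rule invariance[where u="\<lambda>s. x s e" and u'="\<lambda>s. x s e * g e s" and tz=0, OF _ _ that])
    fix s :: real assume "s \<ge> 0" then show "((\<lambda>s. x s e) has_real_derivative x s e * g e s) (at s within {0..})" by (rule dx)
  next
    fix s :: real assume s: "s > 0" "x s e > 1"
    have "x s e / l e \<le> S s" using s by (intro term_le_S) simp
    then have "E s \<le> inverse (x s e / l e)" unfolding E_def
      using s l_pos[of e] by (intro le_imp_inverse_le) auto
    then have "E s / l e \<le> 1 / x s e" using l_pos[of e] s by (simp add: field_simps)
    also have "\<dots> < 1" using s by simp
    finally have "f e (E s / l e) < f e 1" using Epos[of s] s l_pos[of e] by (intro fmono) auto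
    then have "g e s < 0" by (simp add: g_def f1)
    then show "x s e * g e s \<le> 0" using s by (simp add: mult_pos_neg less_imp_le)
  qed
  define Y where "Y = max (x 0 istar) 1"
  have Ypos: "Y > 0" by (simp add: Y_def)
  have ybound: "x t istar \<le> Y" if "t \<ge> 0" for t using xbound[OF that] by (simp add: Y_def)
  define lmax where "lmax = Max (range l)"
  have lmax: "l e \<le> lmax" for e by (simp add: lmax_def)
  have lmaxpos: "lmax > 0" using lmax[of istar] l_pos[of istar] by simp
  define Smin where "Smin = min (S 0) (1 / lmax)"
  have Sminpos: "Smin > 0" using Spos[of 0] lmaxpos by (simp add: Smin_def)
  have Slow: "S t \<ge> Smin" if "t \<ge> 0" for t
  proof -
    have "(\<lambda>s. - S s) t \<le> max ((\<lambda>s. - S s) 0) (- (1 / lmax))"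
    proof (rule invariance[where u="\<lambda>s. - S s" and u'="\<lambda>s. - S' s" and tz=0, OF _ _ that])
      fix s :: real assume "s \<ge> 0" then show "((\<lambda>s. - S s) has_real_derivative - S' s) (at s within {0..})"
        by (intro DERIV_minus dS)
    next
      fix s :: real assume s: "s > 0" "- S s > - (1 / lmax)"
      have "E s > lmax" using s Spos[of s] lmaxpos by (simp add: E_def field_simps)
      then have "g e s > 0" for e
      proof -
        have "1 < E s / l e" using \<open>E s > lmax\<close> lmax[of e] l_pos[of e] by (simp add: field_simps)
        then have "f e 1 < f e (E s / l e)" by (intro fmono) auto
        then show ?thesis by (simp add: g_def f1)
      qed
      then have "S' s > 0" unfolding S'_eq using pos[of s] s l_pos
        by (intro sum_pos) auto
      then show "- S' s \<le> 0" by simp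
    qed
    then show ?thesis by (simp add: Smin_def)
  qed
  define Emax where "Emax = 1 / Smin"
  have Eup: "E t \<le> Emax" if "t \<ge> 0" for t
  proof -
    have "inverse (S t) \<le> inverse Smin" by (rule le_imp_inverse_le[OF Slow[OF that] Sminpos])
    then show ?thesis by (simp add: E_def Emax_def inverse_eq_divide)
  qed
  have Emaxpos: "Emax > 0" using Sminpos by (simp add: Emax_def)
  have Elow: "\<exists>T\<ge>0. \<forall>t\<ge>T. E t \<ge> \<theta>" if th: "0 < \<theta>" "\<theta> < m" for \<theta>
  proof -
    define c where "c = Min ((\<lambda>e. 1 - f e (\<theta> / l e)) ` UNIV)"
    have cpos_e: "1 - f e (\<theta> / l e) > 0" for e
    proof -
      have "\<theta> / l e < 1" using th mle[of e] l_pos[of e] by (simp add: field_simps)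
      then have "f e (\<theta> / l e) < f e 1" using th l_pos[of e] by (intro fmono) auto
      then show ?thesis by (simp add: f1)
    qed
    have cpos: "c > 0" unfolding c_def using cpos_e by simp
    have cle: "c \<le> 1 - f e (\<theta> / l e)" for e unfolding c_def by (rule Min_le) auto
    have "\<exists>T. \<forall>t\<ge>T. ln (S t) \<le> ln (1 / \<theta>)"
    proof (rule eventually_below[where u="\<lambda>t. ln (S t)" and u'="\<lambda>t. 1 / S t * S' t" and tz=0 and c=c, OF _ cpos])
      fix t :: real assume t: "t \<ge> 0"
      show "((\<lambda>t. ln (S t)) has_real_derivative 1 / S t * S' t) (at t within {0..})"
        by (rule DERIV_chain2[OF DERIV_ln_divide[OF Spos[OF t]] dS[OF t]])
    next
      fix t :: real assume t: "t \<ge> 0" and big: "ln (S t) > ln (1 / \<theta>)"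
      have "S t > 1 / \<theta>" using big Spos[OF t] th by simp
      then have Et: "E t < \<theta>" using th Spos[OF t] by (simp add: E_def field_simps)
      have "g e t \<le> - c" for e
      proof -
        have "f e (E t / l e) \<le> f e (\<theta> / l e)"
          using Et Epos[OF t] l_pos[of e] by (intro fmono_le) (auto simp: divide_right_mono)
        then show ?thesis using cle[of e] by (simp add: g_def)
      qed
      then have "S' t \<le> - c * S t" unfolding S'_eq S_def by (rule wavg_le[OF t])
      then show "1 / S t * S' t \<le> - c" using Spos[OF t] by (simp add: field_simps)
    qed
    then obtain T where T: "\<forall>t\<ge>T. ln (S t) \<le> ln (1 / \<theta>)" by blast
    have "\<forall>t\<ge>max T 0. E t \<ge> \<theta>"
    proof (intro allI impI)
      fix t assume t: "t \<ge> max T 0"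
      then have "ln (S t) \<le> ln (1 / \<theta>)" using T by simp
      then have "S t \<le> 1 / \<theta>" using Spos[of t] t th by simp
      then show "E t \<ge> \<theta>" using Spos[of t] t th by (simp add: E_def field_simps)
    qed
    then show ?thesis by (intro exI[of _ "max T 0"]) auto
  qed
  define A where "A = UNIV - {istar}"
  define R where "R = (\<lambda>t. \<Sum>e\<in>A. x t e / l e)"
  define R' where "R' = (\<lambda>t. \<Sum>e\<in>A. x t e * g e t / l e)"
  have Ssplit: "S t = x t istar / m + R t" for t
    unfolding S_def R_def A_def m_def by (rule sum.remove) auto
  have Rnn: "R t \<ge> 0" if "t \<ge> 0" for t
    unfolding R_def using pos[OF that] l_pos by (intro sum_nonneg) (auto intro: less_imp_le)
  have termR: "x t e / l e \<le> R t" if "t \<ge> 0" "e \<in> A" for t e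
    unfolding R_def using pos[OF that(1)] l_pos that by (intro member_le_sum) (auto intro: less_imp_le simp: A_def)
  have dR: "(R has_real_derivative R' t) (at t within {0..})" if "t \<ge> 0" for t
    unfolding R_def R'_def by (rule DERIV_sum, rule DERIV_cdivide, rule dx[OF that])
  have R'_eq: "R' t = (\<Sum>e\<in>A. (x t e / l e) * g e t)" for t
    unfolding R'_def by (simp add: field_simps)
  have ystar_pos: "x t istar > 0" if "t \<ge> 0" for t using pos[OF that] .
  have dlny: "((\<lambda>t. ln (x t istar)) has_real_derivative 1 / x t istar * (x t istar * g istar t)) (at t within {0..})"
    if "t \<ge> 0" for t
    by (rule DERIV_chain2[OF DERIV_ln_divide[OF ystar_pos[OF that]] dx[OF that]])
  have lny_eq: "1 / x t istar * (x t istar * g istar t) = g istar t" if "t \<ge> 0" for t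
    using ystar_pos[OF that] by simp
  have Rlim: "\<exists>T\<ge>0. \<forall>t\<ge>T. R t < r" if r: "r > 0" for r
  proof (cases "A = {}")
    case True
    then show ?thesis using r by (intro exI[of _ 0]) (simp add: R_def)
  next
    case Ane: False
    have Rpos: "R t > 0" if "t \<ge> 0" for t
      unfolding R_def using pos[OF that] l_pos Ane by (intro sum_pos) (auto simp: A_def)
    define m2 where "m2 = Min (l ` A)"
    have gtm: "l e > m" if "e \<in> A" for e
    proof -
      have "l e \<noteq> l istar" using that l_distinct by (auto simp: A_def inj_eq)
      then show ?thesis using mle[of e] by (simp add: m_def)
    qed
    have m2gt: "m2 > m" unfolding m2_def using Ane gtm by (simp add: A_def)
    have m2le: "m2 \<le> l e" if "e \<in> A" for e unfolding m2_def using that by (simp add: A_def)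
    define \<delta> where "\<delta> = (m2 - m) / 2"
    have \<delta>pos: "\<delta> > 0" using m2gt by (simp add: \<delta>_def)
    have lt1: "(m + \<delta>) / l e < 1" if "e \<in> A" for e
      using m2le[OF that] m2gt l_pos[of e] by (simp add: \<delta>_def field_simps)
    define c where "c = Min ((\<lambda>e. 1 - f e ((m + \<delta>) / l e)) ` A)"
    have cpos_e: "1 - f e ((m + \<delta>) / l e) > 0" if "e \<in> A" for e
    proof -
      have "f e ((m + \<delta>) / l e) < f e 1" using lt1[OF that] mpos \<delta>pos l_pos[of e] by (intro fmono) auto
      then show ?thesis by (simp add: f1)
    qed
    have cpos: "c > 0" unfolding c_def using cpos_e Ane by (simp add: A_def)
    have cle: "c \<le> 1 - f e ((m + \<delta>) / l e)" if "e \<in> A" for e unfolding c_def using that by (intro Min_le) (auto simp: A_def)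
    define c' where "c' = f istar ((m + \<delta>) / m) - 1"
    have c'pos: "c' > 0"
    proof -
      have "f istar 1 < f istar ((m + \<delta>) / m)" using mpos \<delta>pos by (intro fmono) (auto simp: field_simps)
      then show ?thesis by (simp add: c'_def f1)
    qed
    define C where "C = max 1 (Max ((\<lambda>e. f e (Emax / l e) - 1) ` A))"
    have Cpos: "C > 0" by (simp add: C_def)
    have Cge: "f e (Emax / l e) - 1 \<le> C" if "e \<in> A" for e
      unfolding C_def using that by (intro max.coboundedI2 Max_ge) (auto simp: A_def)
    define \<alpha> where "\<alpha> = c' / (2 * C)"
    have \<alpha>pos: "\<alpha> > 0" using c'pos Cpos by (simp add: \<alpha>_def)
    define \<eta> where "\<eta> = \<alpha> * c / 2"
    have \<eta>pos: "\<eta> > 0" using \<alpha>pos cpos by (simp add: \<eta>_def)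
    have "continuous (at 1) (f istar)" using fcont[of 1 istar] by simp
    then obtain dd where dd: "dd > 0" "\<And>z. dist z 1 < dd \<Longrightarrow> dist (f istar z) (f istar 1) < \<eta>"
      unfolding continuous_at_eps_delta using \<eta>pos by blast
    define \<theta> where "\<theta> = m * (1 - min (dd / 2) (1 / 2))"
    have th: "0 < \<theta>" "\<theta> < m" using mpos dd by (auto simp: \<theta>_def min_def)
    have "dist (\<theta> / m) 1 < dd" using mpos dd by (auto simp: \<theta>_def dist_real_def min_def)
    then have fth: "f istar (\<theta> / m) > 1 - \<eta>" using dd(2)[of "\<theta> / m"] by (simp add: f1 dist_real_def)
    obtain T1 where T1: "T1 \<ge> 0" "\<And>t. t \<ge> T1 \<Longrightarrow> E t \<ge> \<theta>" using Elow[OF th] by blast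
    have gstar_low: "g istar t \<ge> - \<eta>" if "t \<ge> T1" for t
    proof -
      have "f istar (\<theta> / m) \<le> f istar (E t / m)"
        using T1(2)[OF that] th mpos by (intro fmono_le) (auto simp: divide_right_mono)
      then show ?thesis using fth by (simp add: g_def m_def)
    qed
    define d where "d = min (\<alpha> * c / 2) (c' / 2)"
    have dpos: "d > 0" using \<alpha>pos cpos c'pos by (simp add: d_def)
    define K where "K = - (ln Y - \<alpha> * ln r + 1)"
    have "\<exists>T. \<forall>t\<ge>T. - (ln (x t istar) - \<alpha> * ln (R t)) \<le> K"
    proof (rule eventually_below[where u="\<lambda>t. - (ln (x t istar) - \<alpha> * ln (R t))"
          and u'="\<lambda>t. - (1 / x t istar * (x t istar * g istar t) - \<alpha> * (1 / R t * R' t))"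
          and tz=T1 and c=d, OF _ dpos])
      fix t :: real assume t: "t \<ge> T1"
      then have t0: "t \<ge> 0" using T1 by simp
      have "((\<lambda>t. - (ln (x t istar) - \<alpha> * ln (R t))) has_real_derivative
          - (1 / x t istar * (x t istar * g istar t) - \<alpha> * (1 / R t * R' t))) (at t within {0..})"
        by (intro DERIV_minus DERIV_diff DERIV_cmult dlny[OF t0]
              DERIV_chain2[OF DERIV_ln_divide[OF Rpos[OF t0]] dR[OF t0]])
      then show "((\<lambda>t. - (ln (x t istar) - \<alpha> * ln (R t))) has_real_derivative
          - (1 / x t istar * (x t istar * g istar t) - \<alpha> * (1 / R t * R' t))) (at t within {T1..})"
        by (rule has_field_derivative_subset) (use T1 in auto)
    next
      fix t :: real assume t: "t \<ge> T1"
      then have t0: "t \<ge> 0" using T1 by simp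
      have "g istar t - \<alpha> * (1 / R t * R' t) \<ge> d"
      proof (cases "E t \<le> m + \<delta>")
        case True
        have "g e t \<le> - c" if "e \<in> A" for e
        proof -
          have "f e (E t / l e) \<le> f e ((m + \<delta>) / l e)"
            using True Epos[OF t0] l_pos[of e] by (intro fmono_le) (auto simp: divide_right_mono)
          then show ?thesis using cle[OF that] by (simp add: g_def)
        qed
        then have "R' t \<le> - c * R t" unfolding R'_eq R_def by (rule wavg_le[OF t0])
        then have "1 / R t * R' t \<le> - c" using Rpos[OF t0] by (simp add: field_simps)
        then have "\<alpha> * (1 / R t * R' t) \<le> \<alpha> * (- c)" using \<alpha>pos by (intro mult_left_mono) auto
        then show ?thesis using gstar_low[OF t] by (simp add: d_def \<eta>_def)
      next
        case False
        have "f istar ((m + \<delta>) / m) \<le> f istar (E t / m)"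
          using False mpos \<delta>pos by (intro fmono_le) (auto simp: divide_right_mono)
        then have gs: "g istar t \<ge> c'" by (simp add: g_def c'_def m_def)
        have "g e t \<le> C" if "e \<in> A" for e
        proof -
          have "f e (E t / l e) \<le> f e (Emax / l e)"
            using Eup[OF t0] Epos[OF t0] l_pos[of e] by (intro fmono_le) (auto simp: divide_right_mono)
          then show ?thesis using Cge[OF that] by (simp add: g_def)
        qed
        then have "R' t \<le> C * R t" unfolding R'_eq R_def by (rule wavg_le[OF t0])
        then have "1 / R t * R' t \<le> C" using Rpos[OF t0] by (simp add: field_simps)
        then have "\<alpha> * (1 / R t * R' t) \<le> \<alpha> * C" using \<alpha>pos by (intro mult_left_mono) auto
        moreover have "\<alpha> * C = c' / 2" using Cpos by (simp add: \<alpha>_def)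
        ultimately show ?thesis using gs by (simp add: d_def)
      qed
      then show "- (1 / x t istar * (x t istar * g istar t) - \<alpha> * (1 / R t * R' t)) \<le> - d"
        using lny_eq[OF t0] by simp
    qed
    then obtain T where T: "\<And>t. t \<ge> T \<Longrightarrow> - (ln (x t istar) - \<alpha> * ln (R t)) \<le> K" by blast
    have "\<forall>t\<ge>max T T1. R t < r"
    proof (intro allI impI)
      fix t assume t: "t \<ge> max T T1"
      then have t0: "t \<ge> 0" using T1 by simp
      have "ln (x t istar) \<le> ln Y" using ystar_pos[OF t0] ybound[OF t0] by simp
      moreover have "- (ln (x t istar) - \<alpha> * ln (R t)) \<le> K" using T t by simp
      ultimately have "\<alpha> * ln (R t) < \<alpha> * ln r" by (simp add: K_def)
      then have "ln (R t) < ln r" using \<alpha>pos by simp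
      then show "R t < r" using Rpos[OF t0] r by simp
    qed
    then show ?thesis using T1 by (intro exI[of _ "max T T1"]) auto
  qed
  have ylow: "\<exists>T. \<forall>t\<ge>T. x t istar \<ge> 1 - \<gamma>" if ga: "0 < \<gamma>" "\<gamma> < 1" for \<gamma>
  proof -
    obtain T2 where T2: "T2 \<ge> 0" "\<And>t. t \<ge> T2 \<Longrightarrow> R t < \<gamma> / (2 * m)"
      using Rlim[of "\<gamma> / (2 * m)"] ga mpos by auto
    define c3 where "c3 = f istar (1 / (1 - \<gamma> / 2)) - 1"
    have c3pos: "c3 > 0"
    proof -
      have "f istar 1 < f istar (1 / (1 - \<gamma> / 2))" using ga by (intro fmono) (auto simp: field_simps)
      then show ?thesis by (simp add: c3_def f1)
    qed
    have "\<exists>T. \<forall>t\<ge>T. - ln (x t istar) \<le> - ln (1 - \<gamma>)"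
    proof (rule eventually_below[where u="\<lambda>t. - ln (x t istar)"
          and u'="\<lambda>t. - (1 / x t istar * (x t istar * g istar t))" and tz=T2 and c=c3, OF _ c3pos])
      fix t :: real assume t: "t \<ge> T2"
      then have t0: "t \<ge> 0" using T2 by simp
      show "((\<lambda>t. - ln (x t istar)) has_real_derivative - (1 / x t istar * (x t istar * g istar t))) (at t within {T2..})"
        by (rule has_field_derivative_subset[OF DERIV_minus[OF dlny[OF t0]]]) (use T2 in auto)
    next
      fix t :: real assume t: "t \<ge> T2" and big: "- ln (x t istar) > - ln (1 - \<gamma>)"
      then have t0: "t \<ge> 0" using T2 by simp
      have "x t istar < 1 - \<gamma>" using big ystar_pos[OF t0] ga by simp
      then have "S t < (1 - \<gamma> / 2) / m" using Ssplit[of t] T2(2)[OF t] mpos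
        by (simp add: field_simps)
      then have "E t > m / (1 - \<gamma> / 2)" using Spos[OF t0] mpos ga
        by (simp add: E_def field_simps)
      then have "E t / m > 1 / (1 - \<gamma> / 2)" using mpos ga by (simp add: field_simps)
      then have "f istar (1 / (1 - \<gamma> / 2)) \<le> f istar (E t / m)" using ga by (intro fmono_le) auto
      then have "g istar t \<ge> c3" by (simp add: g_def c3_def m_def)
      then show "- (1 / x t istar * (x t istar * g istar t)) \<le> - c3" using lny_eq[OF t0] by simp
    qed
    then obtain T where T: "\<And>t. t \<ge> T \<Longrightarrow> - ln (x t istar) \<le> - ln (1 - \<gamma>)" by blast
    have "\<forall>t\<ge>max T T2. x t istar \<ge> 1 - \<gamma>"
    proof (intro allI impI)
      fix t assume t: "t \<ge> max T T2"
      then have t0: "t \<ge> 0" using T2 by simp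
      have "ln (1 - \<gamma>) \<le> ln (x t istar)" using T[of t] t by simp
      then show "x t istar \<ge> 1 - \<gamma>" using ystar_pos[OF t0] ga by simp
    qed
    then show ?thesis by blast
  qed
  have Slim: "(S \<longlongrightarrow> 1 / m) at_top"
  proof (rule order_tendstoI)
    fix a assume a: "a < 1 / m"
    show "eventually (\<lambda>t. a < S t) at_top"
    proof (cases "a \<le> 0")
      case True
      then show ?thesis unfolding eventually_at_top_linorder using Spos by force
    next
      case False
      define \<gamma> where "\<gamma> = (1 - a * m) / 2"
      have am0: "a * m > 0" using False mpos by simp
      have am1: "a * m < 1" using a mpos by (simp add: field_simps)
      have ga: "0 < \<gamma>" "\<gamma> < 1" unfolding \<gamma>_def using am0 am1 by auto
      obtain T where T: "\<And>t. t \<ge> T \<Longrightarrow> x t istar \<ge> 1 - \<gamma>" using ylow[OF ga] by blast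
      have "\<forall>t\<ge>max T 0. a < S t"
      proof (intro allI impI)
        fix t assume t: "t \<ge> max T 0"
        have "(1 - \<gamma>) / m \<le> x t istar / m" using T[of t] t mpos by (simp add: divide_right_mono)
        also have "\<dots> \<le> S t" using Ssplit[of t] Rnn[of t] t by simp
        finally have "(1 - \<gamma>) / m \<le> S t" .
        then have h1: "1 - \<gamma> \<le> m * S t" using mpos by (simp add: field_simps)
        have "a * m < m * S t" using h1 am1 unfolding \<gamma>_def by (simp add: field_simps)
        then have "m * a < m * S t" by (simp add: mult.commute)
        then show "a < S t" using mpos by simp
      qed
      then show ?thesis unfolding eventually_at_top_linorder by blast
    qed
  next
    fix b assume b: "1 / m < b"
    then have bpos: "b > 0" using mpos by (smt (verit) divide_pos_pos)
    define \<theta> where "\<theta> = (m + 1 / b) / 2"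
    have ib: "1 / b < m" using b mpos bpos by (simp add: field_simps)
    have ibp: "1 / b > 0" using bpos by simp
    have "0 < m + 1 / b" by (rule add_pos_pos[OF mpos ibp])
    then have th1: "0 < \<theta>" by (simp add: \<theta>_def)
    have th2: "\<theta> < m" unfolding \<theta>_def using ib bpos by (simp add: field_simps)
    note th = th1 th2
    obtain T where T: "T \<ge> 0" "\<And>t. t \<ge> T \<Longrightarrow> E t \<ge> \<theta>" using Elow[OF th] by blast
    have "\<forall>t\<ge>T. S t < b"
    proof (intro allI impI)
      fix t assume t: "t \<ge> T"
      have "\<theta> \<le> inverse (S t)" using T(2)[OF t] by (simp add: E_def)
      then have "S t \<le> 1 / \<theta>" using Spos[of t] T t th by (simp add: field_simps)
      also have "1 / \<theta> < b" using ib bpos th by (simp add: \<theta>_def field_simps)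
      finally show "S t < b" .
    qed
    then show "eventually (\<lambda>t. S t < b) at_top" unfolding eventually_at_top_linorder by blast
  qed
  have Rlim': "(R \<longlongrightarrow> 0) at_top"
  proof (rule order_tendstoI)
    fix a :: real assume "a < 0"
    then show "eventually (\<lambda>t. a < R t) at_top"
      unfolding eventually_at_top_linorder using Rnn by (intro exI[of _ 0]) force
  next
    fix a :: real assume "0 < a"
    then show "eventually (\<lambda>t. R t < a) at_top"
      unfolding eventually_at_top_linorder using Rlim by blast
  qed
  have Elim: "((\<lambda>t. energy l (x t)) \<longlongrightarrow> l istar) at_top"
  proof -
    have "((\<lambda>t. inverse (S t)) \<longlongrightarrow> inverse (1 / m)) at_top"
      by (rule tendsto_inverse[OF Slim]) (use mpos in simp)
    then show ?thesis by (simp add: E_en E_def m_def)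
  qed
  have ylim: "((\<lambda>t. x t istar) \<longlongrightarrow> 1) at_top"
  proof -
    have eq: "x t istar = m * (S t - R t)" for t using Ssplit[of t] mpos by (simp add: field_simps)
    have "((\<lambda>t. m * (S t - R t)) \<longlongrightarrow> m * (1 / m - 0)) at_top"
      by (intro tendsto_intros Slim Rlim')
    then show ?thesis using mpos by (simp add: eq)
  qed
  have olim: "((\<lambda>t. x t e) \<longlongrightarrow> 0) at_top" if "e \<noteq> istar" for e
  proof (rule tendsto_sandwich[where f="\<lambda>t. 0" and h="\<lambda>t. l e * R t"])
    show "eventually (\<lambda>t. 0 \<le> x t e) at_top"
      unfolding eventually_at_top_linorder using pos by (intro exI[of _ 0]) (auto intro: less_imp_le)
    have "x t e \<le> l e * R t" if "t \<ge> 0" for t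
      using termR[OF that, of e] \<open>e \<noteq> istar\<close> l_pos[of e] by (simp add: A_def field_simps)
    then show "eventually (\<lambda>t. x t e \<le> l e * R t) at_top"
      unfolding eventually_at_top_linorder by blast
    show "((\<lambda>t. 0) \<longlongrightarrow> 0) at_top" by simp
    have "((\<lambda>t. l e * R t) \<longlongrightarrow> l e * 0) at_top" by (intro tendsto_intros Rlim')
    then show "((\<lambda>t. l e * R t) \<longlongrightarrow> 0) at_top" by simp
  qed
  show ?thesis using Elim ylim olim by auto
qed

end
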